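(* Let $\mathbb{L}^2$ be as described in the context. Every non-constant geodesic of $\mathbb{L}^2$ has, modulo reparametrization, one of the following forms, for some $\alpha,\beta\in\mathbb{R}$, $c>0$ and choice of sign $\pm$: (1) $\sigma(t)=(e^t,\alpha)$ for $-\infty<t<\infty$; this geodesic is complete. (2) $\sigma(t)=(t^{-1},\pm t^{-1}+\alpha)$ for $0<t<\infty$; this geodesic is incomplete at one end and complete at the other end. (3) $\sigma(t)=\left(\frac{1}{c\sinh(t)},\pm\frac{\coth(t)}{c}+\beta\right)$ for $t\in(0,\infty)$. This tends asymptotically to the line $x^1=0$ as $t\to\infty$ and escapes to the right ($x^1\to\infty$) as $t\to0$. These geodesics are incomplete at one end and complete at the other; they all have infinite (and negative) length. (4) $\sigma(t)=\left(\frac{1}{c\sin(t)},\pm\frac{\cot(t)}{c}+\beta\right)$ for $t\in(0,\pi)$. These escape upwards and to the right as $t\to0$ and downwards and to the right as $t\to\pi$; such a geodesic is incomplete at both ends and has total length $\pi$. (5) The geodesics in (3) and (4) solve an equation of the form $(x^1)^2-\frac{\lambda}{c^2}=(x^2+\beta)^2$ (for suitable $\beta\in\mathbb{R}$) and are hyperbolas; here $\lambda=+1$ for the "vertical" geodesics of (4), $\lambda=-1$ for the "horizontal" geodesics of (3), while $\lambda=0$ corresponds to the null geodesics.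
   Context: $\mathbb{L}^2$ is $\mathbb{R}^+\times\mathbb{R}=\{(x^1,x^2):x^1>0\}$ with the torsion free connection whose nonzero Christoffel symbols (with $\nabla_{\partial_{x^i}}\partial_{x^j}=\Gamma_{ij}{}^k\partial_{x^k}$) are $\Gamma_{11}{}^1=-\frac1{x^1}$, $\Gamma_{12}{}^2=\Gamma_{21}{}^2=-\frac1{x^1}$, $\Gamma_{22}{}^1=-\frac1{x^1}$. This is the Levi--Civita connection of the Lorentzian metric $g=(x^1)^{-2}\operatorname{diag}(-1,1)$ (its symmetric Ricci tensor), and lengths are measured with respect to $g$. A geodesic is complete at an end if it is defined for all parameter values in that direction. *)

theory Defs
  imports "HOL-Analysis.Analysis"
begin

definition L2 :: "(real \<times> real) set" where
  "L2 = {p. fst p > 0}"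

definition coord :: "real \<times> real \<Rightarrow> nat \<Rightarrow> real" where
  "coord p i = (if i = 1 then fst p else snd p)"

definition Chr :: "nat \<Rightarrow> nat \<Rightarrow> nat \<Rightarrow> real \<times> real \<Rightarrow> real" where
  "Chr i j k p =
     (if (i, j, k) \<in> {(1,1,1), (1,2,2), (2,1,2), (2,2,1)} then - 1 / fst p else 0)"

definition geodesic_eq :: "real \<times> real \<Rightarrow> real \<times> real \<Rightarrow> real \<times> real \<Rightarrow> bool" where
  "geodesic_eq p v a \<longleftrightarrow>
     (\<forall>k\<in>{1,2}. coord a k + (\<Sum>i\<in>{1,2}. \<Sum>j\<in>{1,2}. Chr i j k p * coord v i * coord v j) = 0)"

definition is_geodesic :: "real set \<Rightarrow> (real \<Rightarrow> real \<times> real) \<Rightarrow> bool" where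
  "is_geodesic I \<gamma> \<longleftrightarrow> open I \<and> is_interval I \<and> I \<noteq> {} \<and> (\<forall>t\<in>I. \<gamma> t \<in> L2) \<and>
     (\<exists>\<gamma>' \<gamma>''. \<forall>t\<in>I. (\<gamma> has_vector_derivative \<gamma>' t) (at t) \<and>
                     (\<gamma>' has_vector_derivative \<gamma>'' t) (at t) \<and>
                     geodesic_eq (\<gamma> t) (\<gamma>' t) (\<gamma>'' t))"

definition maximal_geodesic :: "real set \<Rightarrow> (real \<Rightarrow> real \<times> real) \<Rightarrow> bool" where
  "maximal_geodesic I \<sigma> \<longleftrightarrow> is_geodesic I \<sigma> \<and>
     (\<forall>J \<gamma>. is_geodesic J \<gamma> \<and> I \<subseteq> J \<and> (\<forall>t\<in>I. \<gamma> t = \<sigma> t) \<longrightarrow> J = I)"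

definition complete_at_top :: "real set \<Rightarrow> bool" where
  "complete_at_top I \<longleftrightarrow> (\<forall>T. \<exists>t\<in>I. t \<ge> T)"

definition complete_at_bot :: "real set \<Rightarrow> bool" where
  "complete_at_bot I \<longleftrightarrow> (\<forall>T. \<exists>t\<in>I. t \<le> T)"

definition metric_g :: "real \<times> real \<Rightarrow> real \<times> real \<Rightarrow> real \<times> real \<Rightarrow> real" where
  "metric_g p v w = (- fst v * fst w + snd v * snd w) / (fst p)\<^sup>2"

definition len_density :: "(real \<Rightarrow> real \<times> real) \<Rightarrow> real \<Rightarrow> real" where
  "len_density \<sigma> t =
     (let q = metric_g (\<sigma> t) (vector_derivative \<sigma> (at t)) (vector_derivative \<sigma> (at t))
      in sgn q * sqrt \<bar>q\<bar>)"

definition sigma1 :: "real \<Rightarrow> real \<Rightarrow> real \<times> real" where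
  "sigma1 \<alpha> t = (exp t, \<alpha>)"

definition sigma2 :: "real \<Rightarrow> real \<Rightarrow> real \<Rightarrow> real \<times> real" where
  "sigma2 s \<alpha> t = (1 / t, s / t + \<alpha>)"

definition sigma3 :: "real \<Rightarrow> real \<Rightarrow> real \<Rightarrow> real \<Rightarrow> real \<times> real" where
  "sigma3 s c \<beta> t = (1 / (c * sinh t), s * (cosh t / sinh t) / c + \<beta>)"

definition sigma4 :: "real \<Rightarrow> real \<Rightarrow> real \<Rightarrow> real \<Rightarrow> real \<times> real" where
  "sigma4 s c \<beta> t = (1 / (c * sin t), s * cot t / c + \<beta>)"

end

theory Submission
  imports Defs "HOL-Real_Asymp.Real_Asymp"
begin


lemma const_on:
  fixes f :: "real \<Rightarrow> real"
  assumes "convex I" "t0 \<in> I" "\<And>t. t \<in> I \<Longrightarrow> (f has_real_derivative 0) (at t)"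
  shows "\<forall>t\<in>I. f t = f t0"
proof -
  obtain c where "\<forall>t\<in>I. f t = c"
    using has_field_derivative_zero_constant[OF assms(1)] assms(3)
    by (meson has_field_derivative_at_within)
  thus ?thesis using assms(2) by auto
qed

lemma ode_uniq:
  fixes w w1 :: "real \<Rightarrow> real"
  assumes I: "convex I" "t0 \<in> I"
    and d: "\<And>t. t \<in> I \<Longrightarrow> (w has_real_derivative w1 t) (at t) \<and> (w1 has_real_derivative (- E * w t)) (at t)"
    and z: "w t0 = 0" "w1 t0 = 0"
  shows "\<forall>t\<in>I. w t = 0"
proof (cases "E > 0")
  case True
  have "\<forall>t\<in>I. (\<lambda>t. (w1 t)^2 + E * (w t)^2) t = (\<lambda>t. (w1 t)^2 + E * (w t)^2) t0"
  proof (rule const_on[OF I])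
    fix t assume "t \<in> I"
    with d[of t] show "((\<lambda>t. (w1 t)^2 + E * (w t)^2) has_real_derivative 0) (at t)"
      by (auto intro!: derivative_eq_intros simp: algebra_simps)
  qed
  then show ?thesis using z True
    by (auto simp: add_nonneg_eq_0_iff)
next
  case False
  show ?thesis
  proof (cases "E = 0")
    case True
    have "\<forall>t\<in>I. w1 t = w1 t0"
      by (rule const_on[OF I]) (use d True in auto)
    hence "\<forall>t\<in>I. w t = w t0"
      by (intro const_on[OF I]) (use d z in auto)
    thus ?thesis using z by auto
  next
    case False2: False
    define mu where "mu = sqrt (- E)"
    have E: "E = - (mu^2)" using False False2 by (simp add: mu_def)
    have "\<forall>t\<in>I. (\<lambda>t. (w1 t - mu * w t) * exp (mu * t)) t = (\<lambda>t. (w1 t - mu * w t) * exp (mu * t)) t0"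
    proof (rule const_on[OF I])
      fix t assume "t \<in> I"
      with d[of t] show "((\<lambda>t. (w1 t - mu * w t) * exp (mu * t)) has_real_derivative 0) (at t)"
        by (auto intro!: derivative_eq_intros simp: algebra_simps E power2_eq_square)
    qed
    hence w1: "\<forall>t\<in>I. w1 t = mu * w t" using z by auto
    have "\<forall>t\<in>I. (\<lambda>t. w t * exp (- mu * t)) t = (\<lambda>t. w t * exp (- mu * t)) t0"
    proof (rule const_on[OF I])
      fix t assume "t \<in> I"
      with d[of t] w1 show "((\<lambda>t. w t * exp (- mu * t)) has_real_derivative 0) (at t)"
        by (auto intro!: derivative_eq_intros simp: algebra_simps)
    qed
    thus ?thesis using z by auto
  qed
qed

lemma geodesic_eq_iff:
  "geodesic_eq p v a \<longleftrightarrow> fst a = ((fst v)^2 + (snd v)^2) / fst p \<and> snd a = 2 * fst v * snd v / fst p"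
  unfolding geodesic_eq_def coord_def Chr_def
  by (auto simp: power2_eq_square field_simps add_divide_distrib)

lemma is_geodesic_dest:
  assumes "is_geodesic I \<gamma>"
  obtains p q where "open I" "is_interval I" "I \<noteq> {}"
    "\<And>t. t \<in> I \<Longrightarrow> fst (\<gamma> t) > 0 \<and>
       ((\<lambda>t. fst (\<gamma> t)) has_real_derivative p t) (at t) \<and>
       ((\<lambda>t. snd (\<gamma> t)) has_real_derivative q t) (at t) \<and>
       (p has_real_derivative ((p t)^2 + (q t)^2) / fst (\<gamma> t)) (at t) \<and>
       (q has_real_derivative 2 * p t * q t / fst (\<gamma> t)) (at t)"
proof -
  from assms obtain g1 g2 where o: "open I" "is_interval I" "I \<noteq> {}" and L: "\<forall>t\<in>I. \<gamma> t \<in> L2"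
    and g: "\<forall>t\<in>I. (\<gamma> has_vector_derivative g1 t) (at t) \<and>
                     (g1 has_vector_derivative g2 t) (at t) \<and>
                     geodesic_eq (\<gamma> t) (g1 t) (g2 t)"
    unfolding is_geodesic_def by blast
  show ?thesis
  proof (rule that[OF o, of "\<lambda>t. fst (g1 t)" "\<lambda>t. snd (g1 t)"])
    fix t assume t: "t \<in> I"
    have a: "((\<lambda>t. fst (\<gamma> t)) has_vector_derivative fst (g1 t)) (at t)"
      using bounded_linear.has_vector_derivative[OF bounded_linear_fst] g t by blast
    have b: "((\<lambda>t. snd (\<gamma> t)) has_vector_derivative snd (g1 t)) (at t)"
      using bounded_linear.has_vector_derivative[OF bounded_linear_snd] g t by blast
    have c: "((\<lambda>t. fst (g1 t)) has_vector_derivative fst (g2 t)) (at t)"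
      using bounded_linear.has_vector_derivative[OF bounded_linear_fst] g t by blast
    have d: "((\<lambda>t. snd (g1 t)) has_vector_derivative snd (g2 t)) (at t)"
      using bounded_linear.has_vector_derivative[OF bounded_linear_snd] g t by blast
    have e: "geodesic_eq (\<gamma> t) (g1 t) (g2 t)" using g t by blast
    show "fst (\<gamma> t) > 0 \<and>
       ((\<lambda>t. fst (\<gamma> t)) has_real_derivative fst (g1 t)) (at t) \<and>
       ((\<lambda>t. snd (\<gamma> t)) has_real_derivative snd (g1 t)) (at t) \<and>
       ((\<lambda>t. fst (g1 t)) has_real_derivative ((fst (g1 t))^2 + (snd (g1 t))^2) / fst (\<gamma> t)) (at t) \<and>
       ((\<lambda>t. snd (g1 t)) has_real_derivative 2 * fst (g1 t) * snd (g1 t) / fst (\<gamma> t)) (at t)"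
      using a b c d e L t
      by (auto simp: has_real_derivative_iff_has_vector_derivative geodesic_eq_iff L2_def)
  qed
qed

lemma is_geodesic_intro:
  fixes x y p q :: "real \<Rightarrow> real"
  assumes "open I" "is_interval I" "I \<noteq> {}"
    "\<And>t. t \<in> I \<Longrightarrow> x t > 0 \<and>
       (x has_real_derivative p t) (at t) \<and>
       (y has_real_derivative q t) (at t) \<and>
       (p has_real_derivative ((p t)^2 + (q t)^2) / x t) (at t) \<and>
       (q has_real_derivative 2 * p t * q t / x t) (at t)"
  shows "is_geodesic I (\<lambda>t. (x t, y t))"
  unfolding is_geodesic_def
proof (intro conjI assms(1-3))
  show "\<forall>t\<in>I. (x t, y t) \<in> L2" using assms(4) by (auto simp: L2_def)
  show "\<exists>\<gamma>' \<gamma>''. \<forall>t\<in>I. ((\<lambda>t. (x t, y t)) has_vector_derivative \<gamma>' t) (at t) \<and>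
                     (\<gamma>' has_vector_derivative \<gamma>'' t) (at t) \<and> geodesic_eq (x t, y t) (\<gamma>' t) (\<gamma>'' t)"
    apply (rule exI[of _ "\<lambda>t. (p t, q t)"])
    apply (rule exI[of _ "\<lambda>t. (((p t)^2 + (q t)^2) / x t, 2 * p t * q t / x t)"])
    using assms(4) by (auto simp: geodesic_eq_iff has_real_derivative_iff_has_vector_derivative intro!: has_vector_derivative_Pair)
qed


lemma classify_pre:
  fixes x y p q :: "real \<Rightarrow> real"
  assumes I: "convex I" "t0 \<in> I"
    and D: "\<And>t. t \<in> I \<Longrightarrow> x t > 0 \<and>
       (x has_real_derivative p t) (at t) \<and>
       (y has_real_derivative q t) (at t) \<and>
       (p has_real_derivative ((p t)^2 + (q t)^2) / x t) (at t) \<and>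
       (q has_real_derivative 2 * p t * q t / x t) (at t)"
    and K_def: "K = q t0 / (x t0)^2"
    and En_def: "En = ((q t0)^2 - (p t0)^2) / (x t0)^2"
  shows "\<forall>t\<in>I. q t = K * (x t)^2"
    and "\<forall>t\<in>I. (q t)^2 - (p t)^2 = En * (x t)^2"
    and "\<forall>t\<in>I. ((\<lambda>t. 1 / x t) has_real_derivative (- p t / (x t)^2)) (at t) \<and>
              ((\<lambda>t. - p t / (x t)^2) has_real_derivative (- En * (1 / x t))) (at t)"
    and "(- p t0 / (x t0)^2)^2 + En * (1 / x t0)^2 = K^2"
proof -
  have "\<forall>t\<in>I. (\<lambda>t. q t / (x t)^2) t = (\<lambda>t. q t / (x t)^2) t0"
  proof (rule const_on[OF I])
    fix t assume "t \<in> I"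
    with D[of t] show "((\<lambda>t. q t / (x t)^2) has_real_derivative 0) (at t)"
      by (auto intro!: derivative_eq_intros simp: field_simps power2_eq_square)
  qed
  then show qK: "\<forall>t\<in>I. q t = K * (x t)^2" unfolding K_def
  proof (intro ballI)
    fix t assume t: "t \<in> I" and h: "\<forall>t\<in>I. q t / (x t)^2 = q t0 / (x t0)^2"
    have "x t > 0" using D[OF t] by auto
    with h t show "q t = q t0 / (x t0)^2 * (x t)^2" by (auto simp: field_simps)
  qed
  have "\<forall>t\<in>I. (\<lambda>t. ((q t)^2 - (p t)^2) / (x t)^2) t = (\<lambda>t. ((q t)^2 - (p t)^2) / (x t)^2) t0"
  proof (rule const_on[OF I])
    fix t assume "t \<in> I"
    with D[of t] show "((\<lambda>t. ((q t)^2 - (p t)^2) / (x t)^2) has_real_derivative 0) (at t)"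
      by (auto intro!: derivative_eq_intros simp: field_simps power2_eq_square)
  qed
  then show EE: "\<forall>t\<in>I. (q t)^2 - (p t)^2 = En * (x t)^2" unfolding En_def
  proof (intro ballI)
    fix t assume t: "t \<in> I" and h: "\<forall>t\<in>I. ((q t)^2 - (p t)^2) / (x t)^2 = ((q t0)^2 - (p t0)^2) / (x t0)^2"
    have "x t > 0" using D[OF t] by auto
    with h t show "(q t)^2 - (p t)^2 = ((q t0)^2 - (p t0)^2) / (x t0)^2 * (x t)^2" by (auto simp: field_simps)
  qed
  show "\<forall>t\<in>I. ((\<lambda>t. 1 / x t) has_real_derivative (- p t / (x t)^2)) (at t) \<and>
              ((\<lambda>t. - p t / (x t)^2) has_real_derivative (- En * (1 / x t))) (at t)"
  proof
    fix t assume t: "t \<in> I"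
    have x0: "x t > 0" using D t by auto
    show "((\<lambda>t. 1 / x t) has_real_derivative (- p t / (x t)^2)) (at t) \<and>
              ((\<lambda>t. - p t / (x t)^2) has_real_derivative (- En * (1 / x t))) (at t)"
    proof
      show "((\<lambda>t. 1 / x t) has_real_derivative (- p t / (x t)^2)) (at t)"
        using D[OF t] by (auto intro!: derivative_eq_intros simp: field_simps power2_eq_square)
      have e: "(q t)^2 - (p t)^2 = En * (x t)^2" using EE t by auto
      have "((\<lambda>t. - p t / (x t)^2) has_real_derivative
          (- (((p t)^2 + (q t)^2) / x t * (x t)^2 - p t * (2 * x t * p t)) / ((x t)^2)^2)) (at t)"
        using D[OF t] by (auto intro!: derivative_eq_intros simp: field_simps power2_eq_square)
      moreover have "(- (((p t)^2 + (q t)^2) / x t * (x t)^2 - p t * (2 * x t * p t)) / ((x t)^2)^2)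
          = - En * (1 / x t)"
      proof -
        have "(- (((p t)^2 + (q t)^2) / x t * (x t)^2 - p t * (2 * x t * p t)) / ((x t)^2)^2)
            = ((q t)^2 - (p t)^2) * (- 1 / (x t)^3)"
          using x0 by (simp add: field_simps power2_eq_square power3_eq_cube power4_eq_xxxx)
        also have "\<dots> = - En * (1 / x t)" using e x0
          by (simp add: field_simps power2_eq_square power3_eq_cube)
        finally show ?thesis .
      qed
      ultimately show "((\<lambda>t. - p t / (x t)^2) has_real_derivative (- En * (1 / x t))) (at t)"
        by simp
    qed
  qed
  show "(- p t0 / (x t0)^2)^2 + En * (1 / x t0)^2 = K^2"
    using D[OF I(2)] unfolding K_def En_def
    by (simp add: field_simps power2_eq_square)
qed


lemma match_sol:
  fixes u ud v vd :: "real \<Rightarrow> real"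
  assumes I: "convex I" "t0 \<in> I"
    and du: "\<And>t. t \<in> I \<Longrightarrow> (u has_real_derivative ud t) (at t) \<and> (ud has_real_derivative (- E * u t)) (at t)"
    and dv: "\<And>t. t \<in> I \<Longrightarrow> (v has_real_derivative vd t) (at t) \<and> (vd has_real_derivative (- E * v t)) (at t)"
    and z: "u t0 = v t0" "ud t0 = vd t0"
  shows "\<forall>t\<in>I. u t = v t"
proof -
  have d: "((\<lambda>t. u t - v t) has_real_derivative ud t - vd t) (at t) \<and>
        ((\<lambda>t. ud t - vd t) has_real_derivative - E * (u t - v t)) (at t)" if t: "t \<in> I" for t
      using du[OF t] dv[OF t] by (auto intro!: derivative_eq_intros simp: algebra_simps)
  have "\<forall>t\<in>I. (\<lambda>t. u t - v t) t = 0"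
    using ode_uniq[OF I, of "\<lambda>t. u t - v t" "\<lambda>t. ud t - vd t" E] d z by auto
  thus ?thesis by auto
qed

definition classified :: "real set \<Rightarrow> (real \<Rightarrow> real \<times> real) \<Rightarrow> bool" where
  "classified I \<gamma> \<longleftrightarrow> (\<exists>a b. a \<noteq> 0 \<and>
              ((\<exists>\<alpha>. \<forall>t\<in>I. \<gamma> t = sigma1 \<alpha> (a * t + b)) \<or>
               (\<exists>s \<alpha>. s \<in> {-1, 1} \<and> (\<forall>t\<in>I. 0 < a * t + b \<and> \<gamma> t = sigma2 s \<alpha> (a * t + b))) \<or>
               (\<exists>s c \<beta>. s \<in> {-1, 1} \<and> c > 0 \<and>
                  (\<forall>t\<in>I. 0 < a * t + b \<and> \<gamma> t = sigma3 s c \<beta> (a * t + b))) \<or>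
               (\<exists>s c \<beta>. s \<in> {-1, 1} \<and> c > 0 \<and>
                  (\<forall>t\<in>I. 0 < a * t + b \<and> a * t + b < pi \<and> \<gamma> t = sigma4 s c \<beta> (a * t + b)))))"

lemma sign_unit:
  fixes K a c :: real
  assumes "K \<noteq> 0" "\<bar>a * c\<bar> = \<bar>K\<bar>"
  shows "- K / (a * c) \<in> {-1, 1}"
proof -
  have "a * c \<noteq> 0" using assms by auto
  then show ?thesis using assms
    by (cases "K > 0"; cases "a * c > 0") (auto simp: abs_if split: if_splits)
qed

lemma classify_K0:
  fixes x y p q :: "real \<Rightarrow> real"
  assumes I: "convex I" "t0 \<in> I"
    and D: "\<And>t. t \<in> I \<Longrightarrow> x t > 0 \<and>
       (x has_real_derivative p t) (at t) \<and>
       (y has_real_derivative q t) (at t) \<and>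
       (p has_real_derivative ((p t)^2 + (q t)^2) / x t) (at t) \<and>
       (q has_real_derivative 2 * p t * q t / x t) (at t)"
    and q0: "\<forall>t\<in>I. q t = 0"
    and nc: "\<exists>s\<in>I. \<exists>t\<in>I. (x s, y s) \<noteq> (x t, y t)"
  shows "classified I (\<lambda>t. (x t, y t))"
proof -
  have C1: "\<forall>t\<in>I. (\<lambda>t. p t / x t) t = (\<lambda>t. p t / x t) t0"
  proof (rule const_on[OF I])
    fix t assume t: "t \<in> I"
    with D[OF t] q0 show "((\<lambda>t. p t / x t) has_real_derivative 0) (at t)"
      by (auto intro!: derivative_eq_intros simp: field_simps power2_eq_square)
  qed
  define m where "m = p t0 / x t0"
  have pm: "\<forall>t\<in>I. p t = m * x t"
  proof
    fix t assume t: "t \<in> I"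
    have "x t > 0" using D[OF t] by auto
    with C1 t show "p t = m * x t" unfolding m_def by (auto simp: field_simps)
  qed
  have C2: "\<forall>t\<in>I. (\<lambda>t. ln (x t) - m * t) t = (\<lambda>t. ln (x t) - m * t) t0"
  proof (rule const_on[OF I])
    fix t assume t: "t \<in> I"
    with D[OF t] pm show "((\<lambda>t. ln (x t) - m * t) has_real_derivative 0) (at t)"
      by (auto intro!: derivative_eq_intros simp: field_simps)
  qed
  define b where "b = ln (x t0) - m * t0"
  have xe: "\<forall>t\<in>I. x t = exp (m * t + b)"
  proof
    fix t assume t: "t \<in> I"
    have "x t > 0" using D[OF t] by auto
    with C2 t have "ln (x t) = m * t + b" unfolding b_def by auto
    thus "x t = exp (m * t + b)" using \<open>x t > 0\<close> by (metis exp_ln)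
  qed
  have ye: "\<forall>t\<in>I. y t = y t0"
    by (rule const_on[OF I]) (use D q0 in fastforce)
  have "m \<noteq> 0"
  proof
    assume "m = 0"
    then have "\<forall>t\<in>I. (x t, y t) = (exp b, y t0)" using xe ye by auto
    with nc show False by auto
  qed
  then show ?thesis unfolding classified_def
    by (intro exI[of _ m] exI[of _ b]) (use xe ye in \<open>auto simp: sigma1_def\<close>)
qed


lemma classify_zero:
  fixes x y u1 :: "real \<Rightarrow> real"
  assumes I: "convex I" "t0 \<in> I"
    and xp: "\<And>t. t \<in> I \<Longrightarrow> x t > 0"
    and dU: "\<And>t. t \<in> I \<Longrightarrow> ((\<lambda>t. 1 / x t) has_real_derivative u1 t) (at t) \<and>
                 (u1 has_real_derivative (- En * (1 / x t))) (at t)"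
    and dy: "\<And>t. t \<in> I \<Longrightarrow> (y has_real_derivative K * (x t)^2) (at t)"
    and en: "(u1 t0)^2 + En * (1 / x t0)^2 = K^2"
    and K: "K \<noteq> 0" and E: "En = 0"
  shows "classified I (\<lambda>t. (x t, y t))"
proof -
  define a where "a = u1 t0"
  define b where "b = 1 / x t0 - a * t0"
  have a2: "a^2 = K^2" using en E unfolding a_def by simp
  hence a0: "a \<noteq> 0" using K by auto
  have ue: "\<forall>t\<in>I. 1 / x t = a * t + b"
    by (rule match_sol[OF I, where ud = u1 and vd = "\<lambda>t. a" and E = En])
       (use dU E in \<open>auto intro!: derivative_eq_intros simp: a_def b_def\<close>)
  have pos: "\<forall>t\<in>I. a * t + b > 0" using ue xp by (metis divide_pos_pos zero_less_one)
  have xe: "\<forall>t\<in>I. x t = 1 / (a * t + b)" using ue xp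
    by (metis div_by_1 divide_divide_eq_right mult_1 nonzero_divide_mult_cancel_left
        less_irrefl)
  define s where "s = - K / a"
  have "a = K \<or> a = - K" using a2 by (simp add: power2_eq_iff)
  hence s: "s \<in> {-1, 1}" unfolding s_def using K by auto
  have sa: "s * a = - K" using a0 by (simp add: s_def)
  have C: "\<forall>t\<in>I. (\<lambda>t. y t - s / (a * t + b)) t = (\<lambda>t. y t - s / (a * t + b)) t0"
  proof (rule const_on[OF I])
    fix t assume t: "t \<in> I"
    have p: "a * t + b > 0" using pos t by auto
    have "((\<lambda>t. y t - s / (a * t + b)) has_real_derivative K * (x t)^2 - (- (s * a) / (a * t + b)^2)) (at t)"
      using dy[OF t] p by (auto intro!: derivative_eq_intros simp: field_simps power2_eq_square)
    moreover have "K * (x t)^2 - (- (s * a) / (a * t + b)^2) = 0"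
      using xe t sa by (simp add: power_divide)
    ultimately show "((\<lambda>t. y t - s / (a * t + b)) has_real_derivative 0) (at t)" by simp
  qed
  show ?thesis unfolding classified_def
    apply (rule exI[of _ a], rule exI[of _ b], rule conjI[OF a0], rule disjI2, rule disjI1)
    apply (rule exI[of _ s], rule exI[of _ "y t0 - s / (a * t0 + b)"])
    using C s pos xe by (auto simp: sigma2_def)
qed

lemma coth_deriv:
  fixes a b t :: real
  assumes "a * t + b \<noteq> 0"
  shows "((\<lambda>t. cosh (a * t + b) / sinh (a * t + b)) has_real_derivative (- a / (sinh (a * t + b))^2)) (at t)"
proof -
  have s: "sinh (a * t + b) \<noteq> 0" using assms by simp
  have c: "(cosh (a * t + b))^2 = (sinh (a * t + b))^2 + 1" by (rule cosh_square_eq)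
  have "((\<lambda>t. cosh (a * t + b) / sinh (a * t + b)) has_real_derivative
     ((sinh (a * t + b) * a) * sinh (a * t + b) - cosh (a * t + b) * (cosh (a * t + b) * a)) / (sinh (a * t + b) * sinh (a * t + b))) (at t)"
    by (rule DERIV_divide) (auto intro!: derivative_eq_intros s assms)
  moreover have "((sinh (a * t + b) * a) * sinh (a * t + b) - cosh (a * t + b) * (cosh (a * t + b) * a)) / (sinh (a * t + b) * sinh (a * t + b))
     = - a / (sinh (a * t + b))^2"
  proof -
    have "(sinh (a * t + b) * a) * sinh (a * t + b) - cosh (a * t + b) * (cosh (a * t + b) * a) = - a"
      using c by (simp add: power2_eq_square algebra_simps)
    thus ?thesis by (simp add: power2_eq_square)
  qed
  ultimately show ?thesis by simp
qed
lemma cot_deriv: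
  fixes a b t :: real
  assumes "sin (a * t + b) \<noteq> 0"
  shows "((\<lambda>t. cot (a * t + b)) has_real_derivative (- a / (sin (a * t + b))^2)) (at t)"
proof -
  have "((\<lambda>t. cot (a * t + b)) has_real_derivative (-inverse ((sin (a * t + b))^2)) * a) (at t)"
  proof (rule DERIV_chain2[of cot "-inverse ((sin (a * t + b))^2)" "\<lambda>t. a * t + b" t a UNIV])
    show "(cot has_real_derivative - inverse ((sin (a * t + b))\<^sup>2)) (at (a * t + b))" using DERIV_cot[OF assms] .
    show "((\<lambda>t. a * t + b) has_real_derivative a) (at t)" by (auto intro!: derivative_eq_intros)
  qed
  thus ?thesis by (simp add: field_simps)
qed

lemma classify_neg:
  fixes x y u1 :: "real \<Rightarrow> real"
  assumes I: "convex I" "t0 \<in> I"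
    and xp: "\<And>t. t \<in> I \<Longrightarrow> x t > 0"
    and dU: "\<And>t. t \<in> I \<Longrightarrow> ((\<lambda>t. 1 / x t) has_real_derivative u1 t) (at t) \<and>
                 (u1 has_real_derivative (- En * (1 / x t))) (at t)"
    and dy: "\<And>t. t \<in> I \<Longrightarrow> (y has_real_derivative K * (x t)^2) (at t)"
    and en: "(u1 t0)^2 + En * (1 / x t0)^2 = K^2"
    and K: "K \<noteq> 0" and E: "En < 0"
  shows "classified I (\<lambda>t. (x t, y t))"
proof -
  define mu where "mu = sqrt (- En)"
  have mu0: "mu > 0" using E by (simp add: mu_def)
  have Emu: "En = - (mu^2)" using E by (simp add: mu_def)
  define A where "A = 1 / x t0"
  have A0: "A > 0" using xp[OF I(2)] by (simp add: A_def)
  define B where "B = u1 t0 / mu"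
  have u1B: "u1 t0 = mu * B" using mu0 by (simp add: B_def)
  have en2: "mu^2 * (B^2 - A^2) = K^2" using en unfolding Emu u1B A_def[symmetric]
    by (simp add: algebra_simps power_mult_distrib)
  have K2: "K^2 > 0" using K by simp
  have BA: "B^2 - A^2 > 0"
  proof (rule ccontr)
    assume "\<not> B^2 - A^2 > 0"
    hence "mu^2 * (B^2 - A^2) \<le> 0" using mu0 by (simp add: mult_nonneg_nonpos)
    thus False using en2 K2 by simp
  qed
  define R where "R = sqrt (B^2 - A^2)"
  have R0: "R > 0" using BA by (simp add: R_def)
  have R2: "R^2 = B^2 - A^2" using BA by (simp add: R_def)
  have muR: "mu * R = \<bar>K\<bar>"
  proof -
    have "(mu * R)^2 = K^2" using en2 R2 by (simp add: power_mult_distrib)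
    hence "\<bar>mu * R\<bar> = \<bar>K\<bar>" using power2_eq_iff_nonneg abs_ge_zero
      by (metis power2_abs)
    thus ?thesis using mu0 R0 by simp
  qed
  have B0: "B \<noteq> 0" using BA A0 by auto
  define a where "a = sgn B * mu"
  have a0: "a \<noteq> 0" using B0 mu0 by (simp add: a_def sgn_0_0)
  have a2: "a^2 = mu^2" using B0 by (cases "B > 0") (auto simp: a_def power_mult_distrib)
  define ph where "ph = arsinh (A / R)"
  define b where "b = ph - a * t0"
  have ue: "\<forall>t\<in>I. 1 / x t = R * sinh (a * t + b)"
  proof (rule match_sol[OF I, where ud = u1 and vd = "\<lambda>t. R * a * cosh (a * t + b)" and E = En])
    fix t assume t: "t \<in> I"
    show "((\<lambda>t. 1 / x t) has_real_derivative u1 t) (at t) \<and> (u1 has_real_derivative - En * (1 / x t)) (at t)"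
      using dU[OF t] .
    show "((\<lambda>t. R * sinh (a * t + b)) has_real_derivative R * a * cosh (a * t + b)) (at t) \<and>
        ((\<lambda>t. R * a * cosh (a * t + b)) has_real_derivative - En * (R * sinh (a * t + b))) (at t)"
      using a2 by (auto intro!: derivative_eq_intros simp: Emu power2_eq_square algebra_simps)
  next
    show "1 / x t0 = R * sinh (a * t0 + b)"
      using R0 by (simp add: b_def ph_def A_def)
    have "R * a * cosh (a * t0 + b) = a * (R * sqrt ((A / R)^2 + 1))"
      by (simp add: b_def ph_def cosh_arsinh_real)
    also have "R * sqrt ((A / R)^2 + 1) = sqrt (A^2 + R^2)"
    proof -
      have "R * sqrt ((A / R)^2 + 1) = sqrt (R^2 * ((A / R)^2 + 1))"
        using R0 by (simp add: real_sqrt_mult)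
      also have "R^2 * ((A / R)^2 + 1) = A^2 + R^2" using R0 by (simp add: field_simps)
      finally show ?thesis .
    qed
    also have "sqrt (A^2 + R^2) = \<bar>B\<bar>" using R2 by simp
    finally have "R * a * cosh (a * t0 + b) = a * \<bar>B\<bar>" .
    moreover have "a * \<bar>B\<bar> = mu * B" using B0 by (cases "B > 0") (auto simp: a_def)
    ultimately show "u1 t0 = R * a * cosh (a * t0 + b)" using u1B by simp
  qed
  have pos: "\<forall>t\<in>I. a * t + b > 0"
  proof
    fix t assume t: "t \<in> I"
    have "R * sinh (a * t + b) > 0" using ue xp[OF t] t by (metis divide_pos_pos zero_less_one)
    thus "a * t + b > 0" using R0 by (simp add: zero_less_mult_iff)
  qed
  have xe: "\<forall>t\<in>I. x t = 1 / (R * sinh (a * t + b))"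
  proof
    fix t assume t: "t \<in> I"
    have "x t > 0" using xp t by auto
    thus "x t = 1 / (R * sinh (a * t + b))" using ue t by (metis divide_divide_eq_right div_by_1 mult_1 nonzero_mult_div_cancel_left less_irrefl)
  qed
  define s where "s = - K / (a * R)"
  have aR: "a * R = K \<or> a * R = - K"
  proof -
    have "\<bar>a * R\<bar> = \<bar>K\<bar>" using muR R0 B0 mu0 by (simp add: a_def abs_mult)
    thus ?thesis by (auto simp: abs_eq_iff)
  qed
  hence s: "s \<in> {-1, 1}" unfolding s_def using K by auto
  have saR: "s * a * R = - K" using a0 R0 by (simp add: s_def)
  have C: "\<forall>t\<in>I. (\<lambda>t. y t - s * (cosh (a * t + b) / sinh (a * t + b)) / R) t =
                (\<lambda>t. y t - s * (cosh (a * t + b) / sinh (a * t + b)) / R) t0"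
  proof (rule const_on[OF I])
    fix t assume t: "t \<in> I"
    have p: "a * t + b \<noteq> 0" using pos t by auto
    have "((\<lambda>t. y t - s * (cosh (a * t + b) / sinh (a * t + b)) / R) has_real_derivative
        K * (x t)^2 - s * (- a / (sinh (a * t + b))^2) / R) (at t)"
      by (rule DERIV_diff[OF dy[OF t] DERIV_cdivide[OF DERIV_cmult[OF coth_deriv[OF p]]]])
    moreover have "K * (x t)^2 - s * (- a / (sinh (a * t + b))^2) / R = 0"
    proof -
      have "K * (x t)^2 - s * (- a / (sinh (a * t + b))^2) / R = (K + s * a * R) / (R^2 * (sinh (a * t + b))^2)"
        using xe t R0 p by (simp add: field_simps power2_eq_square)
      thus ?thesis using saR by simp
    qed
    ultimately show "((\<lambda>t. y t - s * (cosh (a * t + b) / sinh (a * t + b)) / R) has_real_derivative 0) (at t)"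
      by simp
  qed
  show ?thesis unfolding classified_def
    apply (rule exI[of _ a], rule exI[of _ b], rule conjI[OF a0], rule disjI2, rule disjI2, rule disjI1)
    apply (rule exI[of _ s], rule exI[of _ R], rule exI[of _ "y t0 - s * (cosh (a * t0 + b) / sinh (a * t0 + b)) / R"])
    using C s pos xe R0 by (auto simp: sigma3_def)
qed



lemma classify_pos:
  fixes x y u1 :: "real \<Rightarrow> real"
  assumes I: "convex I" "t0 \<in> I" and Ii: "is_interval I"
    and xp: "\<And>t. t \<in> I \<Longrightarrow> x t > 0"
    and dU: "\<And>t. t \<in> I \<Longrightarrow> ((\<lambda>t. 1 / x t) has_real_derivative u1 t) (at t) \<and>
                 (u1 has_real_derivative (- En * (1 / x t))) (at t)"
    and dy: "\<And>t. t \<in> I \<Longrightarrow> (y has_real_derivative K * (x t)^2) (at t)"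
    and en: "(u1 t0)^2 + En * (1 / x t0)^2 = K^2"
    and K: "K \<noteq> 0" and E: "En > 0"
  shows "classified I (\<lambda>t. (x t, y t))"
proof -
  define a where "a = sqrt En"
  have a0: "a > 0" using E by (simp add: a_def)
  have Ea: "En = a^2" using E by (simp add: a_def)
  define A where "A = 1 / x t0"
  have A0: "A > 0" using xp[OF I(2)] by (simp add: A_def)
  define B where "B = u1 t0 / a"
  have u1B: "u1 t0 = a * B" using a0 by (simp add: B_def)
  have en2: "a^2 * (B^2 + A^2) = K^2" using en unfolding Ea u1B A_def[symmetric]
    by (simp add: algebra_simps power_mult_distrib)
  define R where "R = sqrt (A^2 + B^2)"
  have AB: "A^2 + B^2 > 0" using A0 by (simp add: add_pos_nonneg)
  have R0: "R > 0" using AB by (simp add: R_def)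
  have R2: "R^2 = A^2 + B^2" using AB by (simp add: R_def)
  have aR: "a * R = \<bar>K\<bar>"
  proof -
    have "(a * R)^2 = K^2" using en2 R2 by (simp add: power_mult_distrib algebra_simps)
    hence "\<bar>a * R\<bar> = \<bar>K\<bar>" by (metis power2_abs power2_eq_iff_nonneg abs_ge_zero)
    thus ?thesis using a0 R0 by simp
  qed
  have BR: "\<bar>B / R\<bar> < 1"
  proof -
    have "B^2 < R^2" using R2 A0 by simp
    hence "\<bar>B\<bar> < R" using R0 power_less_imp_less_base[of "\<bar>B\<bar>" 2 R] by simp
    moreover have "\<bar>B / R\<bar> = \<bar>B\<bar> / R" using R0 by simp
    ultimately show ?thesis using R0 by simp
  qed
  define th where "th = arccos (B / R)"
  have BR2: "-1 < B / R" "B / R < 1" using BR by (auto simp only: abs_less_iff)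
  have th: "0 < th" "th < pi" using arccos_lt_bounded[OF BR2] unfolding th_def by auto
  define b where "b = th - a * t0"
  have ue: "\<forall>t\<in>I. 1 / x t = R * sin (a * t + b)"
  proof (rule match_sol[OF I, where ud = u1 and vd = "\<lambda>t. R * a * cos (a * t + b)" and E = En])
    fix t assume t: "t \<in> I"
    show "((\<lambda>t. 1 / x t) has_real_derivative u1 t) (at t) \<and> (u1 has_real_derivative - En * (1 / x t)) (at t)"
      using dU[OF t] .
    show "((\<lambda>t. R * sin (a * t + b)) has_real_derivative R * a * cos (a * t + b)) (at t) \<and>
        ((\<lambda>t. R * a * cos (a * t + b)) has_real_derivative - En * (R * sin (a * t + b))) (at t)"
      by (auto intro!: derivative_eq_intros simp: Ea power2_eq_square algebra_simps)
  next
    have "R * sin th = R * sqrt (1 - (B / R)^2)" using BR by (simp add: th_def sin_arccos_abs)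
    also have "\<dots> = sqrt (R^2 * (1 - (B / R)^2))" using R0 by (simp add: real_sqrt_mult)
    also have "R^2 * (1 - (B / R)^2) = A^2"
    proof -
      have "R^2 * (1 - (B / R)^2) = R^2 - B^2" using R0 by (simp add: power_divide right_diff_distrib)
      thus ?thesis using R2 by simp
    qed
    finally show "1 / x t0 = R * sin (a * t0 + b)"
      using A0 by (simp add: b_def A_def)
    have "R * a * cos th = a * B" using BR2 R0 by (simp add: th_def)
    thus "u1 t0 = R * a * cos (a * t0 + b)" using u1B by (simp add: b_def) (metis mult.commute)
  qed
  have sp: "\<forall>t\<in>I. sin (a * t + b) > 0"
  proof
    fix t assume t: "t \<in> I"
    have "R * sin (a * t + b) > 0" using ue xp[OF t] t by (metis divide_pos_pos zero_less_one)
    thus "sin (a * t + b) > 0" using R0 by (simp add: zero_less_mult_iff)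
  qed
  have pos: "\<forall>t\<in>I. 0 < a * t + b \<and> a * t + b < pi"
  proof
    fix t assume t: "t \<in> I"
    show "0 < a * t + b \<and> a * t + b < pi"
    proof (rule ccontr)
      assume "\<not> (0 < a * t + b \<and> a * t + b < pi)"
      then consider "a * t + b \<le> 0" | "a * t + b \<ge> pi" by linarith
      then show False
      proof cases
        case 1
        define t1 where "t1 = - b / a"
        have "t \<le> t1" "t1 \<le> t0" using 1 th a0 by (auto simp: t1_def b_def field_simps)
        hence "t1 \<in> I" using Ii t I(2) unfolding is_interval_1 by blast
        moreover have "a * t1 + b = 0" using a0 by (simp add: t1_def)
        ultimately show False using sp by fastforce
      next
        case 2
        define t1 where "t1 = (pi - b) / a"
        have "t0 \<le> t1" "t1 \<le> t" using 2 th a0 by (auto simp: t1_def b_def field_simps)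
        hence "t1 \<in> I" using Ii t I(2) unfolding is_interval_1 by blast
        moreover have "a * t1 + b = pi" using a0 by (simp add: t1_def)
        ultimately show False using sp by fastforce
      qed
    qed
  qed
  have xe: "\<forall>t\<in>I. x t = 1 / (R * sin (a * t + b))"
  proof
    fix t assume t: "t \<in> I"
    have "x t > 0" using xp t by auto
    thus "x t = 1 / (R * sin (a * t + b))" using ue t by (metis divide_divide_eq_right div_by_1 mult_1 nonzero_mult_div_cancel_left less_irrefl)
  qed
  define s where "s = - K / (a * R)"
  have "a * R = K \<or> a * R = - K" using aR by (auto simp: abs_eq_iff)
  hence s: "s \<in> {-1, 1}" unfolding s_def using K by auto
  have saR: "s * a * R = - K" using a0 R0 by (simp add: s_def)
  have C: "\<forall>t\<in>I. (\<lambda>t. y t - s * cot (a * t + b) / R) t = (\<lambda>t. y t - s * cot (a * t + b) / R) t0"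
  proof (rule const_on[OF I])
    fix t assume t: "t \<in> I"
    have p: "sin (a * t + b) \<noteq> 0" using sp t by auto
    have "((\<lambda>t. y t - s * cot (a * t + b) / R) has_real_derivative
        K * (x t)^2 - s * (- a / (sin (a * t + b))^2) / R) (at t)"
      by (rule DERIV_diff[OF dy[OF t] DERIV_cdivide[OF DERIV_cmult[OF cot_deriv[OF p]]]])
    moreover have "K * (x t)^2 - s * (- a / (sin (a * t + b))^2) / R = 0"
    proof -
      have "K * (x t)^2 - s * (- a / (sin (a * t + b))^2) / R = (K + s * a * R) / (R^2 * (sin (a * t + b))^2)"
        using xe t R0 p by (simp add: field_simps power2_eq_square)
      thus ?thesis using saR by simp
    qed
    ultimately show "((\<lambda>t. y t - s * cot (a * t + b) / R) has_real_derivative 0) (at t)"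
      by simp
  qed
  show ?thesis unfolding classified_def
    apply (rule exI[of _ a], rule exI[of _ b], rule conjI, use a0 in simp, rule disjI2, rule disjI2, rule disjI2)
    apply (rule exI[of _ s], rule exI[of _ R], rule exI[of _ "y t0 - s * cot (a * t0 + b) / R"])
    using C s pos xe R0 by (auto simp: sigma4_def)
qed



lemma classify_geod:
  assumes g: "is_geodesic I \<gamma>" and nc: "\<exists>s\<in>I. \<exists>t\<in>I. \<gamma> s \<noteq> \<gamma> t"
  shows "classified I \<gamma>"
proof -
  obtain p q where o: "open I" "is_interval I" "I \<noteq> {}" and
    D: "\<And>t. t \<in> I \<Longrightarrow> fst (\<gamma> t) > 0 \<and>
       ((\<lambda>t. fst (\<gamma> t)) has_real_derivative p t) (at t) \<and>
       ((\<lambda>t. snd (\<gamma> t)) has_real_derivative q t) (at t) \<and>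
       (p has_real_derivative ((p t)^2 + (q t)^2) / fst (\<gamma> t)) (at t) \<and>
       (q has_real_derivative 2 * p t * q t / fst (\<gamma> t)) (at t)"
    using is_geodesic_dest[OF g] by metis
  obtain t0 where t0: "t0 \<in> I" using o by auto
  have cv: "convex I" using o(2) by (simp add: is_interval_convex)
  define x where "x = (\<lambda>t. fst (\<gamma> t))"
  define y where "y = (\<lambda>t. snd (\<gamma> t))"
  have gxy: "\<gamma> = (\<lambda>t. (x t, y t))" by (simp add: x_def y_def)
  have D': "\<And>t. t \<in> I \<Longrightarrow> x t > 0 \<and>
       (x has_real_derivative p t) (at t) \<and>
       (y has_real_derivative q t) (at t) \<and>
       (p has_real_derivative ((p t)^2 + (q t)^2) / x t) (at t) \<and>
       (q has_real_derivative 2 * p t * q t / x t) (at t)"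
    using D unfolding x_def y_def by blast
  define K where "K = q t0 / (x t0)^2"
  define En where "En = ((q t0)^2 - (p t0)^2) / (x t0)^2"
  note pre = classify_pre[OF cv t0 D' K_def En_def]
  have nc': "\<exists>s\<in>I. \<exists>t\<in>I. (x s, y s) \<noteq> (x t, y t)" using nc gxy by auto
  have xp: "\<And>t. t \<in> I \<Longrightarrow> x t > 0" using D' by blast
  have dU: "\<And>t. t \<in> I \<Longrightarrow> ((\<lambda>t. 1 / x t) has_real_derivative (\<lambda>t. - p t / (x t)^2) t) (at t) \<and>
                 ((\<lambda>t. - p t / (x t)^2) has_real_derivative (- En * (1 / x t))) (at t)"
    using pre(3) by auto
  have dy: "\<And>t. t \<in> I \<Longrightarrow> (y has_real_derivative K * (x t)^2) (at t)"
    using D' pre(1) by metis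
  have en: "((\<lambda>t. - p t / (x t)^2) t0)^2 + En * (1 / x t0)^2 = K^2" using pre(4) by simp
  have "classified I (\<lambda>t. (x t, y t))"
  proof (cases "K = 0")
    case True
    show ?thesis by (rule classify_K0[OF cv t0 D' _ nc']) (use pre(1) True in auto)
  next
    case False
    consider "En = 0" | "En < 0" | "En > 0" by linarith
    then show ?thesis
    proof cases
      case 1 show ?thesis by (rule classify_zero[OF cv t0 xp dU dy en False 1])
    next
      case 2 show ?thesis by (rule classify_neg[OF cv t0 xp dU dy en False 2])
    next
      case 3 show ?thesis by (rule classify_pos[OF cv t0 o(2) xp dU dy en False 3])
    qed
  qed
  thus ?thesis using gxy by simp
qed



lemma sigma1_geod: "is_geodesic UNIV (sigma1 \<alpha>)"
proof -
  have "is_geodesic UNIV (\<lambda>t. (exp t, \<alpha>))"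
    by (rule is_geodesic_intro[where p = exp and q = "\<lambda>t. 0"])
       (auto intro!: derivative_eq_intros simp: power2_eq_square)
  thus ?thesis by (simp add: sigma1_def[abs_def])
qed

lemma sigma2_geod: assumes s: "s \<in> {-1, 1}" shows "is_geodesic {0<..} (sigma2 s \<alpha>)"
proof -
  have s2: "s * s = 1" using s by auto
  have "is_geodesic {0<..} (\<lambda>t. (1 / t, s / t + \<alpha>))"
  proof (rule is_geodesic_intro[where p = "\<lambda>t. - 1 / t^2" and q = "\<lambda>t. - s / t^2"])
    fix t :: real assume t: "t \<in> {0<..}"
    then show "1 / t > 0 \<and>
       ((\<lambda>t. 1 / t) has_real_derivative - 1 / t^2) (at t) \<and>
       ((\<lambda>t. s / t + \<alpha>) has_real_derivative - s / t^2) (at t) \<and>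
       ((\<lambda>t. - 1 / t^2) has_real_derivative ((- 1 / t^2)^2 + (- s / t^2)^2) / (1 / t)) (at t) \<and>
       ((\<lambda>t. - s / t^2) has_real_derivative 2 * (- 1 / t^2) * (- s / t^2) / (1 / t)) (at t)"
      using s2 by (auto intro!: derivative_eq_intros simp: field_simps power2_eq_square)
  qed (auto simp: is_interval_1)
  thus ?thesis by (simp add: sigma2_def[abs_def])
qed

lemma sigma3_derivs:
  fixes t c s :: real
  assumes t: "t > 0" and c: "c > 0" and s: "s \<in> {-1, 1}"
  shows "1 / (c * sinh t) > 0 \<and>
       ((\<lambda>t. 1 / (c * sinh t)) has_real_derivative - cosh t / (c * (sinh t)^2)) (at t) \<and>
       ((\<lambda>t. s * (cosh t / sinh t) / c + \<beta>) has_real_derivative - s / (c * (sinh t)^2)) (at t) \<and>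
       ((\<lambda>t. - cosh t / (c * (sinh t)^2)) has_real_derivative
           ((- cosh t / (c * (sinh t)^2))^2 + (- s / (c * (sinh t)^2))^2) / (1 / (c * sinh t))) (at t) \<and>
       ((\<lambda>t. - s / (c * (sinh t)^2)) has_real_derivative
           2 * (- cosh t / (c * (sinh t)^2)) * (- s / (c * (sinh t)^2)) / (1 / (c * sinh t))) (at t)"
proof -
  have s2: "s * s = 1" using s by auto
  have sh: "sinh t > 0" using t by simp
  have ch: "cosh t * cosh t = sinh t * sinh t + 1" using cosh_square_eq[of t] by (simp add: power2_eq_square)
  show ?thesis
    using sh c s2 ch
    apply (auto intro!: derivative_eq_intros simp: field_simps power2_eq_square)
    by algebra
qed


lemma sigma4_derivs:
  fixes t c s :: real
  assumes t: "sin t > 0" and c: "c > 0" and s: "s \<in> {-1, 1}"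
  shows "1 / (c * sin t) > 0 \<and>
       ((\<lambda>t. 1 / (c * sin t)) has_real_derivative - cos t / (c * (sin t)^2)) (at t) \<and>
       ((\<lambda>t. s * cot t / c + \<beta>) has_real_derivative - s / (c * (sin t)^2)) (at t) \<and>
       ((\<lambda>t. - cos t / (c * (sin t)^2)) has_real_derivative
           ((- cos t / (c * (sin t)^2))^2 + (- s / (c * (sin t)^2))^2) / (1 / (c * sin t))) (at t) \<and>
       ((\<lambda>t. - s / (c * (sin t)^2)) has_real_derivative
           2 * (- cos t / (c * (sin t)^2)) * (- s / (c * (sin t)^2)) / (1 / (c * sin t))) (at t)"
proof -
  have s2: "s * s = 1" using s by auto
  have ch: "cos t * cos t = 1 - sin t * sin t" using sin_cos_squared_add[of t] by (simp add: power2_eq_square)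
  show ?thesis
    unfolding cot_def
    using t c s2
    apply (auto intro!: derivative_eq_intros simp: field_simps power2_eq_square)
    apply (use ch in algebra)+
    done
qed

lemma sigma3_geod: assumes s: "s \<in> {-1, 1}" and c: "c > 0" shows "is_geodesic {0<..} (sigma3 s c \<beta>)"
proof -
  have "is_geodesic {0<..} (\<lambda>t. (1 / (c * sinh t), s * (cosh t / sinh t) / c + \<beta>))"
    by (rule is_geodesic_intro[where p = "\<lambda>t. - cosh t / (c * (sinh t)^2)" and q = "\<lambda>t. - s / (c * (sinh t)^2)"])
       (use sigma3_derivs[OF _ c s] in \<open>auto simp: is_interval_1\<close>)
  thus ?thesis by (simp add: sigma3_def[abs_def])
qed

lemma sigma4_geod: assumes s: "s \<in> {-1, 1}" and c: "c > 0" shows "is_geodesic {0<..<pi} (sigma4 s c \<beta>)"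
proof -
  have "is_geodesic {0<..<pi} (\<lambda>t. (1 / (c * sin t), s * cot t / c + \<beta>))"
    apply (rule is_geodesic_intro[where p = "\<lambda>t. - cos t / (c * (sin t)^2)" and q = "\<lambda>t. - s / (c * (sin t)^2)"])
       apply (simp, simp add: is_interval_1, simp add: pi_gt_zero not_le)
    apply (rule sigma4_derivs[OF _ c s])
    apply (auto intro: sin_gt_zero)
    done
  thus ?thesis by (simp add: sigma4_def[abs_def])
qed

lemma sigma3_vd: assumes s: "s \<in> {-1, 1}" and c: "c > 0" and t: "t > 0"
  shows "vector_derivative (sigma3 s c \<beta>) (at t) = (- cosh t / (c * (sinh t)^2), - s / (c * (sinh t)^2))"
proof -
  have "((\<lambda>t. (1 / (c * sinh t), s * (cosh t / sinh t) / c + \<beta>)) has_vector_derivative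
      (- cosh t / (c * (sinh t)^2), - s / (c * (sinh t)^2))) (at t)"
    using sigma3_derivs[OF t c s, of \<beta>]
    by (auto intro!: has_vector_derivative_Pair simp: has_real_derivative_iff_has_vector_derivative)
  thus ?thesis by (simp add: sigma3_def[abs_def] vector_derivative_at)
qed

lemma sigma4_vd: assumes s: "s \<in> {-1, 1}" and c: "c > 0" and t: "sin t > 0"
  shows "vector_derivative (sigma4 s c \<beta>) (at t) = (- cos t / (c * (sin t)^2), - s / (c * (sin t)^2))"
proof -
  have "((\<lambda>t. (1 / (c * sin t), s * cot t / c + \<beta>)) has_vector_derivative
      (- cos t / (c * (sin t)^2), - s / (c * (sin t)^2))) (at t)"
    using sigma4_derivs[OF t c s, of \<beta>]
    by (auto intro!: has_vector_derivative_Pair simp: has_real_derivative_iff_has_vector_derivative)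
  thus ?thesis by (simp add: sigma4_def[abs_def] vector_derivative_at)
qed

lemma sigma2_vd: assumes t: "t > 0"
  shows "vector_derivative (sigma2 s \<alpha>) (at t) = (- 1 / t^2, - s / t^2)"
proof -
  have "((\<lambda>t. (1 / t, s / t + \<alpha>)) has_vector_derivative (- 1 / t^2, - s / t^2)) (at t)"
    using t
    by (auto intro!: has_vector_derivative_Pair derivative_eq_intros simp: has_real_derivative_iff_has_vector_derivative[symmetric] field_simps power2_eq_square)
  thus ?thesis by (simp add: sigma2_def[abs_def] vector_derivative_at)
qed

lemma sigma3_len: assumes s: "s \<in> {-1, 1}" and c: "c > 0" and t: "t > 0"
  shows "len_density (sigma3 s c \<beta>) t = -1"
proof -
  have s2: "s * s = 1" using s by auto
  have sh: "sinh t > 0" using t by simp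
  have ch: "cosh t * cosh t = sinh t * sinh t + 1" using cosh_square_eq[of t] by (simp add: power2_eq_square)
  have "metric_g (sigma3 s c \<beta> t) (vector_derivative (sigma3 s c \<beta>) (at t)) (vector_derivative (sigma3 s c \<beta>) (at t)) = -1"
    unfolding sigma3_vd[OF s c t] metric_g_def using sh c s2 ch
    by (simp add: sigma3_def field_simps power2_eq_square)
  thus ?thesis by (simp add: len_density_def)
qed

lemma sigma4_len: assumes s: "s \<in> {-1, 1}" and c: "c > 0" and t: "sin t > 0"
  shows "len_density (sigma4 s c \<beta>) t = 1"
proof -
  have s2: "s * s = 1" using s by auto
  have ch: "cos t * cos t = 1 - sin t * sin t" using sin_cos_squared_add[of t] by (simp add: power2_eq_square)
  have "metric_g (sigma4 s c \<beta> t) (vector_derivative (sigma4 s c \<beta>) (at t)) (vector_derivative (sigma4 s c \<beta>) (at t)) = 1"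
    unfolding sigma4_vd[OF s c t] metric_g_def using t c s2
    apply (simp add: sigma4_def field_simps power2_eq_square)
    by (use ch in algebra)
  thus ?thesis by (simp add: len_density_def)
qed


lemma geod_no_blowup:
  assumes g: "is_geodesic J \<gamma>" and a: "a \<in> J"
    and F: "F = at_right a \<or> F = at_left a"
    and ev: "eventually (\<lambda>t. \<gamma> t = \<sigma> t) F"
    and lim: "filterlim (\<lambda>t. fst (\<sigma> t)) at_top F"
  shows False
proof -
  obtain g1 where "(\<gamma> has_vector_derivative g1) (at a)"
    using g a unfolding is_geodesic_def by blast
  hence "continuous (at a) \<gamma>" by (rule has_vector_derivative_continuous)
  hence "(\<gamma> \<longlongrightarrow> \<gamma> a) (at a)" by (simp add: continuous_at)
  hence "(\<gamma> \<longlongrightarrow> \<gamma> a) F" using F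
    by (auto intro: tendsto_within_subset)
  hence t1: "((\<lambda>t. fst (\<gamma> t)) \<longlongrightarrow> fst (\<gamma> a)) F" by (rule tendsto_fst)
  have "eventually (\<lambda>t. fst (\<sigma> t) = fst (\<gamma> t)) F" using ev by (auto elim: eventually_mono)
  hence "filterlim (\<lambda>t. fst (\<gamma> t)) at_top F" using lim filterlim_cong by fastforce
  hence t2: "filterlim (\<lambda>t. fst (\<gamma> t)) at_infinity F" by (rule filterlim_at_top_imp_at_infinity)
  have "F \<noteq> bot" using F by (metis trivial_limit_at_right_real trivial_limit_at_left_real)
  thus False using not_tendsto_and_filterlim_at_infinity[OF _ t1 t2] by blast
qed

lemma maximal_Ioi:
  assumes g: "is_geodesic {0<..} \<sigma>" and lim: "filterlim (\<lambda>t. fst (\<sigma> t)) at_top (at_right 0)"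
  shows "maximal_geodesic {0<..} \<sigma>"
  unfolding maximal_geodesic_def
proof (intro conjI g allI impI)
  fix J \<gamma> assume h: "is_geodesic J \<gamma> \<and> {0<..} \<subseteq> J \<and> (\<forall>t\<in>{0<..}. \<gamma> t = \<sigma> t)"
  show "J = {0<..}"
  proof (rule ccontr)
    assume "J \<noteq> {0<..}"
    hence "\<not> J \<subseteq> {0<..}" using h by blast
    then obtain t where t: "t \<in> J" "t \<le> 0" by (auto simp: subset_eq not_less)
    have "(1::real) \<in> J" using h by auto
    hence "0 \<in> J" using h t unfolding is_geodesic_def is_interval_1 by (meson zero_le_one)
    moreover have "eventually (\<lambda>t. \<gamma> t = \<sigma> t) (at_right 0)"
      using h by (auto simp: eventually_at_right_field intro: exI[of _ 1])
    ultimately show False using geod_no_blowup[OF conjunct1[OF h] _ _ _ lim] by blast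
  qed
qed

lemma maximal_Ioo:
  assumes g: "is_geodesic {0<..<pi} \<sigma>" and lim1: "filterlim (\<lambda>t. fst (\<sigma> t)) at_top (at_right 0)"
    and lim2: "filterlim (\<lambda>t. fst (\<sigma> t)) at_top (at_left pi)"
  shows "maximal_geodesic {0<..<pi} \<sigma>"
  unfolding maximal_geodesic_def
proof (intro conjI g allI impI)
  fix J \<gamma> assume h: "is_geodesic J \<gamma> \<and> {0<..<pi} \<subseteq> J \<and> (\<forall>t\<in>{0<..<pi}. \<gamma> t = \<sigma> t)"
  have iv: "is_interval J" using h unfolding is_geodesic_def by auto
  have m: "pi / 2 \<in> J" using h pi_gt_zero by auto
  show "J = {0<..<pi}"
  proof (rule ccontr)
    assume "J \<noteq> {0<..<pi}"
    then obtain t where t: "t \<in> J" "t \<le> 0 \<or> t \<ge> pi" using h by force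
    then consider "t \<le> 0" | "t \<ge> pi" by auto
    then show False
    proof cases
      case 1
      hence "0 \<in> J" using iv t m pi_gt_zero unfolding is_interval_1
        by (meson less_eq_real_def half_gt_zero)
      moreover have "eventually (\<lambda>t. \<gamma> t = \<sigma> t) (at_right 0)"
        using h pi_gt_zero by (auto simp: eventually_at_right_field intro!: exI[of _ pi])
      ultimately show False using geod_no_blowup[OF conjunct1[OF h] _ _ _ lim1] by blast
    next
      case 2
      hence "pi \<in> J" using iv t m pi_gt_zero unfolding is_interval_1
        by (smt (verit, best) field_sum_of_halves)
      moreover have "eventually (\<lambda>t. \<gamma> t = \<sigma> t) (at_left pi)"
        using h pi_gt_zero by (auto simp: eventually_at_left_field intro!: exI[of _ 0])
      ultimately show False using geod_no_blowup[OF conjunct1[OF h] _ _ _ lim2] by blast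
    qed
  qed
qed

lemma emeas_Ioi: "emeasure lborel ({0<..}::real set) = \<infinity>"
proof (rule ccontr)
  assume a: "emeasure lborel ({0<..}::real set) \<noteq> \<infinity>"
  then obtain r where r: "emeasure lborel ({0<..}::real set) = ennreal r" "r \<ge> 0"
    by (cases "emeasure lborel ({0<..}::real set)") auto
  have "emeasure lborel {0<..<r+1} \<le> emeasure lborel ({0<..}::real set)" by (rule emeasure_mono) auto
  then have "ennreal (r+1) \<le> ennreal r" using r by simp
  thus False using r by (simp add: ennreal_le_iff)
qed

lemma const_integral_pi: "((\<lambda>x::real. 1) has_integral pi) {0<..<pi}"
proof -
  have "((\<lambda>x::real. 1) has_integral pi) {0..pi}" using has_integral_const_real[of "1::real" 0 pi] by simp
  thus ?thesis using has_integral_open_interval[of "\<lambda>x::real. 1" pi 0 pi] by (simp add: box_real)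
qed

theorem theorem4p1:
  shows "(\<forall>I \<gamma>. is_geodesic I \<gamma> \<and> (\<exists>s\<in>I. \<exists>t\<in>I. \<gamma> s \<noteq> \<gamma> t) \<longrightarrow>
           (\<exists>a b. a \<noteq> 0 \<and>
              ((\<exists>\<alpha>. \<forall>t\<in>I. \<gamma> t = sigma1 \<alpha> (a * t + b)) \<or>
               (\<exists>s \<alpha>. s \<in> {-1, 1} \<and> (\<forall>t\<in>I. 0 < a * t + b \<and> \<gamma> t = sigma2 s \<alpha> (a * t + b))) \<or>
               (\<exists>s c \<beta>. s \<in> {-1, 1} \<and> c > 0 \<and>
                  (\<forall>t\<in>I. 0 < a * t + b \<and> \<gamma> t = sigma3 s c \<beta> (a * t + b))) \<or>
               (\<exists>s c \<beta>. s \<in> {-1, 1} \<and> c > 0 \<and>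
                  (\<forall>t\<in>I. 0 < a * t + b \<and> a * t + b < pi \<and> \<gamma> t = sigma4 s c \<beta> (a * t + b))))))
   \<and> (\<forall>\<alpha>. maximal_geodesic UNIV (sigma1 \<alpha>) \<and> complete_at_bot UNIV \<and> complete_at_top UNIV)
   \<and> (\<forall>s \<alpha>. s \<in> {-1, 1} \<longrightarrow>
        maximal_geodesic {0<..} (sigma2 s \<alpha>) \<and>
        \<not> complete_at_bot {0<..} \<and> complete_at_top {0<..})
   \<and> (\<forall>s c \<beta>. s \<in> {-1, 1} \<and> c > 0 \<longrightarrow>
        maximal_geodesic {0<..} (sigma3 s c \<beta>) \<and>
        \<not> complete_at_bot {0<..} \<and> complete_at_top {0<..} \<and>
        ((\<lambda>t. fst (sigma3 s c \<beta> t)) \<longlongrightarrow> 0) at_top \<and>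
        filterlim (\<lambda>t. fst (sigma3 s c \<beta> t)) at_top (at_right 0) \<and>
        (\<forall>t>0. len_density (sigma3 s c \<beta>) t < 0) \<and>
        (\<integral>\<^sup>+ t. ennreal (- len_density (sigma3 s c \<beta>) t) * indicator {0<..} t \<partial>lborel) = \<infinity>)
   \<and> (\<forall>s c \<beta>. s \<in> {-1, 1} \<and> c > 0 \<longrightarrow>
        maximal_geodesic {0<..<pi} (sigma4 s c \<beta>) \<and>
        \<not> complete_at_bot {0<..<pi} \<and> \<not> complete_at_top {0<..<pi} \<and>
        filterlim (\<lambda>t. fst (sigma4 s c \<beta> t)) at_top (at_right 0) \<and>
        filterlim (\<lambda>t. s * snd (sigma4 s c \<beta> t)) at_top (at_right 0) \<and>
        filterlim (\<lambda>t. fst (sigma4 s c \<beta> t)) at_top (at_left pi) \<and>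
        filterlim (\<lambda>t. s * snd (sigma4 s c \<beta> t)) at_bot (at_left pi) \<and>
        (len_density (sigma4 s c \<beta>) has_integral pi) {0<..<pi})
   \<and> (\<forall>s c \<beta>. s \<in> {-1, 1} \<and> c > 0 \<longrightarrow>
        (\<exists>\<beta>'. \<forall>t>0. (fst (sigma3 s c \<beta> t))\<^sup>2 - (-1) / c\<^sup>2 = (snd (sigma3 s c \<beta> t) + \<beta>')\<^sup>2) \<and>
        (\<exists>\<beta>'. \<forall>t\<in>{0<..<pi}. (fst (sigma4 s c \<beta> t))\<^sup>2 - 1 / c\<^sup>2 = (snd (sigma4 s c \<beta> t) + \<beta>')\<^sup>2))
   \<and> (\<forall>s \<alpha>. s \<in> {-1, 1} \<longrightarrow>
        (\<forall>t>0. metric_g (sigma2 s \<alpha> t) (vector_derivative (sigma2 s \<alpha>) (at t))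
                 (vector_derivative (sigma2 s \<alpha>) (at t)) = 0) \<and>
        (\<exists>\<beta>'. \<forall>t>0. (fst (sigma2 s \<alpha> t))\<^sup>2 - 0 = (snd (sigma2 s \<alpha> t) + \<beta>')\<^sup>2))"
proof (intro conjI allI impI)
  fix I \<gamma> assume h: "is_geodesic I \<gamma> \<and> (\<exists>s\<in>I. \<exists>t\<in>I. \<gamma> s \<noteq> \<gamma> t)"
  show "\<exists>a b. a \<noteq> 0 \<and>
              ((\<exists>\<alpha>. \<forall>t\<in>I. \<gamma> t = sigma1 \<alpha> (a * t + b)) \<or>
               (\<exists>s \<alpha>. s \<in> {-1, 1} \<and> (\<forall>t\<in>I. 0 < a * t + b \<and> \<gamma> t = sigma2 s \<alpha> (a * t + b))) \<or>
               (\<exists>s c \<beta>. s \<in> {-1, 1} \<and> c > 0 \<and>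
                  (\<forall>t\<in>I. 0 < a * t + b \<and> \<gamma> t = sigma3 s c \<beta> (a * t + b))) \<or>
               (\<exists>s c \<beta>. s \<in> {-1, 1} \<and> c > 0 \<and>
                  (\<forall>t\<in>I. 0 < a * t + b \<and> a * t + b < pi \<and> \<gamma> t = sigma4 s c \<beta> (a * t + b))))"
    using classify_geod[of I \<gamma>] h unfolding classified_def by blast
next
  fix \<alpha> :: real
  show "maximal_geodesic UNIV (sigma1 \<alpha>)"
    unfolding maximal_geodesic_def using sigma1_geod by auto
  show "complete_at_bot UNIV" unfolding complete_at_bot_def by auto
  show "complete_at_top UNIV" unfolding complete_at_top_def by auto
next
  fix s \<alpha> :: real assume s: "s \<in> {-1, 1}"
  have lim: "filterlim (\<lambda>t. fst (sigma2 s \<alpha> t)) at_top (at_right 0)"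
    unfolding sigma2_def by simp real_asymp
  show "maximal_geodesic {0<..} (sigma2 s \<alpha>)" by (rule maximal_Ioi[OF sigma2_geod[OF s] lim])
next
  show "\<not> complete_at_bot {0<..}" unfolding complete_at_bot_def by (auto intro!: exI[of _ 0])
next
  show "complete_at_top {0<..}" unfolding complete_at_top_def
  proof
    fix T :: real show "\<exists>t\<in>{0<..}. t \<ge> T" by (rule bexI[of _ "max T 1"]) auto
  qed
next
  fix s c \<beta> :: real assume sc: "s \<in> {-1, 1} \<and> c > 0"
  hence s: "s \<in> {-1, 1}" and c: "c > 0" by auto
  have lim: "filterlim (\<lambda>t. fst (sigma3 s c \<beta> t)) at_top (at_right 0)"
    unfolding sigma3_def using c by simp real_asymp
  thus "filterlim (\<lambda>t. fst (sigma3 s c \<beta> t)) at_top (at_right 0)" .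
  show "maximal_geodesic {0<..} (sigma3 s c \<beta>)" by (rule maximal_Ioi[OF sigma3_geod[OF s c] lim])
  show "((\<lambda>t. fst (sigma3 s c \<beta> t)) \<longlongrightarrow> 0) at_top"
    unfolding sigma3_def using c by simp real_asymp
  show "len_density (sigma3 s c \<beta>) t < 0" if "t > 0" for t using sigma3_len[OF s c that] by simp
  have "(\<integral>\<^sup>+ t. ennreal (- len_density (sigma3 s c \<beta>) t) * indicator {0<..} t \<partial>lborel)
      = (\<integral>\<^sup>+ t. indicator {0<..} (t::real) \<partial>lborel)"
    by (rule nn_integral_cong) (auto simp: sigma3_len[OF s c] indicator_def)
  also have "\<dots> = \<infinity>" by (simp add: emeas_Ioi)
  finally show "(\<integral>\<^sup>+ t. ennreal (- len_density (sigma3 s c \<beta>) t) * indicator {0<..} t \<partial>lborel) = \<infinity>" .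
next
  show "\<not> complete_at_bot {0<..}" unfolding complete_at_bot_def by (auto intro!: exI[of _ 0])
next
  show "complete_at_top {0<..}" unfolding complete_at_top_def
  proof
    fix T :: real show "\<exists>t\<in>{0<..}. t \<ge> T" by (rule bexI[of _ "max T 1"]) auto
  qed
next
  fix s c \<beta> :: real assume sc: "s \<in> {-1, 1} \<and> c > 0"
  hence s: "s \<in> {-1, 1}" and c: "c > 0" by auto
  have s2: "s * s = 1" using s by auto
  have l1: "filterlim (\<lambda>t. fst (sigma4 s c \<beta> t)) at_top (at_right 0)"
    unfolding sigma4_def using c by simp real_asymp
  have l2: "filterlim (\<lambda>t. fst (sigma4 s c \<beta> t)) at_top (at_left pi)"
    unfolding sigma4_def using c by simp real_asymp
  show "filterlim (\<lambda>t. fst (sigma4 s c \<beta> t)) at_top (at_right 0)" by (rule l1)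
  show "filterlim (\<lambda>t. fst (sigma4 s c \<beta> t)) at_top (at_left pi)" by (rule l2)
  show "maximal_geodesic {0<..<pi} (sigma4 s c \<beta>)" by (rule maximal_Ioo[OF sigma4_geod[OF s c] l1 l2])
  have ss: "(\<lambda>t. s * snd (sigma4 s c \<beta> t)) = (\<lambda>t. cos t / sin t / c + s * \<beta>)"
    using s2 by (auto simp: sigma4_def cot_def algebra_simps)
  show "filterlim (\<lambda>t. s * snd (sigma4 s c \<beta> t)) at_top (at_right 0)"
    unfolding ss using c by real_asymp
  show "filterlim (\<lambda>t. s * snd (sigma4 s c \<beta> t)) at_bot (at_left pi)"
    unfolding ss using c by real_asymp
  show "\<not> complete_at_bot {0<..<pi}" unfolding complete_at_bot_def by (auto intro!: exI[of _ 0])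
  show "\<not> complete_at_top {0<..<pi}" unfolding complete_at_top_def by (auto intro!: exI[of _ pi])
  show "(len_density (sigma4 s c \<beta>) has_integral pi) {0<..<pi}"
    using const_integral_pi
    by (subst has_integral_cong[where g = "\<lambda>x. 1"]) (auto simp: sigma4_len[OF s c] sin_gt_zero)
next
  fix s c \<beta> :: real assume sc: "s \<in> {-1, 1} \<and> c > 0"
  hence s: "s \<in> {-1, 1}" and c: "c > 0" by auto
  have s2: "s * s = 1" using s by auto
  show "\<exists>\<beta>'. \<forall>t>0. (fst (sigma3 s c \<beta> t))\<^sup>2 - (-1) / c\<^sup>2 = (snd (sigma3 s c \<beta> t) + \<beta>')\<^sup>2"
  proof (intro exI[of _ "- \<beta>"] allI impI)
    fix t :: real assume t: "t > 0"
    have sh: "sinh t > 0" using t by simp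
    have ch: "cosh t * cosh t = sinh t * sinh t + 1" using cosh_square_eq[of t] by (simp add: power2_eq_square)
    show "(fst (sigma3 s c \<beta> t))\<^sup>2 - (-1) / c\<^sup>2 = (snd (sigma3 s c \<beta> t) + - \<beta>)\<^sup>2"
      using sh c
      apply (simp add: sigma3_def field_simps power2_eq_square)
      by (use ch s2 in algebra)
  qed
  show "\<exists>\<beta>'. \<forall>t\<in>{0<..<pi}. (fst (sigma4 s c \<beta> t))\<^sup>2 - 1 / c\<^sup>2 = (snd (sigma4 s c \<beta> t) + \<beta>')\<^sup>2"
  proof (intro exI[of _ "- \<beta>"] ballI)
    fix t :: real assume t: "t \<in> {0<..<pi}"
    have sh: "sin t > 0" using t by (auto intro: sin_gt_zero)
    have ch: "cos t * cos t = 1 - sin t * sin t" using sin_cos_squared_add[of t] by (simp add: power2_eq_square)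
    show "(fst (sigma4 s c \<beta> t))\<^sup>2 - 1 / c\<^sup>2 = (snd (sigma4 s c \<beta> t) + - \<beta>)\<^sup>2"
      using sh c
      apply (simp add: sigma4_def cot_def field_simps power2_eq_square)
      by (use ch s2 in algebra)
  qed
next
  fix s \<alpha> :: real assume s: "s \<in> {-1, 1}"
  have s2: "s * s = 1" using s by auto
  show "metric_g (sigma2 s \<alpha> t) (vector_derivative (sigma2 s \<alpha>) (at t))
                 (vector_derivative (sigma2 s \<alpha>) (at t)) = 0" if "t > 0" for t
    using s2 that by (auto simp: sigma2_vd metric_g_def sigma2_def field_simps power2_eq_square)
  show "\<exists>\<beta>'. \<forall>t>0. (fst (sigma2 s \<alpha> t))\<^sup>2 - 0 = (snd (sigma2 s \<alpha> t) + \<beta>')\<^sup>2"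
    using s2 by (intro exI[of _ "- \<alpha>"]) (auto simp: sigma2_def field_simps power2_eq_square)
qed


end
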